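(* Under Strategy 2A (described in the context), let $V(\omega)$ be the number of uncles created during the attack cycle $\omega$ that are referred by nephew blocks in an attack cycle strictly after $\omega$. Then $$\mathbb{E}[V]=pq^2\cdot\frac{1-(pq)^{n_1-1}}{1-pq}.$$
   Context: Honest hashrate $p$, attacker hashrate $q$, $p+q=1$, $0<q<p$; $\gamma\in[0,1]$ is the fraction of honest hashrate mining on the attacker's block during a public competition between equal-height blocks. Attack cycles are i.i.d. words in S (attacker block) and H (honest block): H, SHS, SHH, or SSwH with $w$ a Dyck word; $\mathbb{P}[H]=p$, $\mathbb{P}[SHS]=pq^2$, $\mathbb{P}[SHH]=p^2q$, $\mathbb{P}[SSwH]=q^2p(pq)^{|w|}$ ($|w|$ half the length of $w$). Ethereum rules: an uncle is a non-official block whose parent is official; a nephew (official block) may refer an uncle at distance (height difference) at most $n_1$ ($n_1\ge2$ an integer). Strategy 2A ("brutal fork"): the attacker keeps his whole fork secret and releases it all at once at the end of the attack cycle, when an honest block would reduce his advance to one block (after a single attacker block, he publishes it to compete with the honest block); the attacker's fork wins in cycles starting with SS; all miners refer all possible uncles. *)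

theory Defs
  imports "HOL-Analysis.Analysis"
begin

text \<open>Attack cycles are words over {S, H}; we encode S (attacker block) as True
and H (honest block) as False.  Positions in the word are the blocks of the cycle,
in the order in which they are mined.  Heights are relative to the last official
block before the cycle (the base block, height 0).\<close>

fun dyck_aux :: "nat \<Rightarrow> bool list \<Rightarrow> bool" where
  "dyck_aux n [] = (n = 0)"
| "dyck_aux n (True # w) = dyck_aux (Suc n) w"
| "dyck_aux 0 (False # w) = False"
| "dyck_aux (Suc n) (False # w) = dyck_aux n w"

definition dyck :: "bool list \<Rightarrow> bool" where
  "dyck w = dyck_aux 0 w"

definition attack_cycles :: "bool list set" where
  "attack_cycles = {[False], [True, False, True], [True, False, False]}
     \<union> {[True, True] @ w @ [False] | w. dyck w}"

text \<open>Probability of a cycle; for SSwH, |w| is half the length of w.\<close>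
definition cycle_prob :: "real \<Rightarrow> real \<Rightarrow> bool list \<Rightarrow> real" where
  "cycle_prob p q \<omega> =
     (if \<omega> = [False] then p
      else if \<omega> = [True, False, True] then p * q^2
      else if \<omega> = [True, False, False] then p^2 * q
      else if (\<exists>w. dyck w \<and> \<omega> = [True, True] @ w @ [False])
        then q^2 * p * (p * q) ^ ((length \<omega> - 3) div 2)
      else 0)"

definition attacker_wins :: "bool list \<Rightarrow> bool" where
  "attacker_wins \<omega> = (take 2 \<omega> = [True, True] \<or> \<omega> = [True, False, True])"

definition official :: "bool list \<Rightarrow> nat \<Rightarrow> bool" where
  "official \<omega> i = (\<omega> ! i = attacker_wins \<omega>)"

text \<open>Parent of block i: each party mines on its own chain during the cycle
(honest miners on the public chain, the attacker on his secret fork), so the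
parent is the last earlier block of the same party, or the base block (None).
In cycle SHH the second honest block is taken to be mined on the first honest
block; if instead it is mined on the attacker's block, the numbers of uncles
and of their referrals inside the cycle are the same.\<close>
definition parent :: "bool list \<Rightarrow> nat \<Rightarrow> nat option" where
  "parent \<omega> i = (if \<exists>j<i. \<omega> ! j = \<omega> ! i
                  then Some (GREATEST j. j < i \<and> \<omega> ! j = \<omega> ! i) else None)"

definition height :: "bool list \<Rightarrow> nat \<Rightarrow> nat" where
  "height \<omega> i = length (filter (\<lambda>b. b = \<omega> ! i) (take (Suc i) \<omega>))"

definition parent_official :: "bool list \<Rightarrow> nat \<Rightarrow> bool" where
  "parent_official \<omega> i = (case parent \<omega> i of None \<Rightarrow> True | Some j \<Rightarrow> official \<omega> j)"

definition uncle :: "bool list \<Rightarrow> nat \<Rightarrow> bool" where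
  "uncle \<omega> i = (\<not> official \<omega> i \<and> parent_official \<omega> i)"

text \<open>Block i is known to the miner of block j (j > i): the attacker knows all blocks,
honest blocks are public, and under Strategy 2A an attacker block is published
before the end of the cycle only in cycles starting with SH (the first block,
published when the honest block is found).\<close>
definition visible :: "bool list \<Rightarrow> nat \<Rightarrow> nat \<Rightarrow> bool" where
  "visible \<omega> i j = (\<omega> ! j \<or> \<not> \<omega> ! i \<or> (i = 0 \<and> \<omega> ! 1 = False \<and> 2 \<le> j))"

text \<open>Uncle i is referred by an official (nephew) block of the same cycle,
mined after it, at distance between 1 and n1 (all miners refer all possible uncles).\<close>
definition referred_within :: "nat \<Rightarrow> bool list \<Rightarrow> nat \<Rightarrow> bool" where
  "referred_within n1 \<omega> i =
     (\<exists>j<length \<omega>. i < j \<and> official \<omega> j \<and> visible \<omega> i j \<and>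
        height \<omega> i < height \<omega> j \<and> height \<omega> j \<le> height \<omega> i + n1)"

text \<open>Height of the first official block after the cycle (the next cycle's
first official block); later cycles provide official blocks at every height
from this one on, all of which refer all possible uncles.\<close>
definition next_official_height :: "bool list \<Rightarrow> nat" where
  "next_official_height \<omega> = card {i. i < length \<omega> \<and> official \<omega> i} + 1"

text \<open>V(\<omega>): uncles created in cycle \<omega> that are referred by a nephew in a later
cycle, i.e. not referred inside \<omega> and some later official block is within
distance n1.\<close>
definition V :: "nat \<Rightarrow> bool list \<Rightarrow> nat" where
  "V n1 \<omega> = card {i. i < length \<omega> \<and> uncle \<omega> i \<and> \<not> referred_within n1 \<omega> i \<and>
      (\<exists>h. next_official_height \<omega> \<le> h \<and> height \<omega> i < h \<and> h \<le> height \<omega> i + n1)}"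

end

theory Submission
  imports Defs
begin

lemma dyck_aux_repT: "dyck_aux n (replicate a True @ xs) = dyck_aux (n+a) xs"
  by (induction a arbitrary: n) auto

lemma dyck_aux_repF: "dyck_aux n (replicate b False) = (n = b)"
  by (induction b arbitrary: n) (auto elim: dyck_aux.elims)

lemma dyck_rep: "dyck (replicate a True @ replicate b False) = (a = b)"
  by (simp add: dyck_def dyck_aux_repT dyck_aux_repF)

lemma less3: "(i::nat) < 3 \<longleftrightarrow> i = 0 \<or> i = 1 \<or> i = 2" by auto

lemma V_H: "V n1 [False] = 0"
  unfolding V_def uncle_def official_def attacker_wins_def by auto

lemma V_SHS: assumes n: "1 \<le> n1" shows "V n1 [True, False, True] = 0"
proof -
  have "{i. i < length [True, False, True] \<and> uncle [True, False, True] i \<and> \<not> referred_within n1 [True, False, True] i \<and>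
      (\<exists>h. next_official_height [True, False, True] \<le> h \<and> height [True, False, True] i < h \<and> h \<le> height [True, False, True] i + n1)} = {}"
  proof (rule equals0I)
    fix i assume "i \<in> {i. i < length [True, False, True] \<and> uncle [True, False, True] i \<and> \<not> referred_within n1 [True, False, True] i \<and>
      (\<exists>h. next_official_height [True, False, True] \<le> h \<and> height [True, False, True] i < h \<and> h \<le> height [True, False, True] i + n1)}"
    then have "i < length [True, False, True]" "uncle [True, False, True] i" "\<not> referred_within n1 [True, False, True] i" by auto
    then have "i = 1" unfolding uncle_def official_def attacker_wins_def by (auto simp: less_Suc_eq)
    moreover have "referred_within n1 [True, False, True] 1"
      unfolding referred_within_def official_def attacker_wins_def visible_def height_def
      using n by (intro exI[of _ 2]) auto
    ultimately show False using \<open>\<not> referred_within n1 [True, False, True] i\<close> by simp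
  qed
  thus ?thesis unfolding V_def by simp
qed

lemma V_SHH: assumes n: "1 \<le> n1" shows "V n1 [True, False, False] = 0"
proof -
  have "{i. i < length [True, False, False] \<and> uncle [True, False, False] i \<and> \<not> referred_within n1 [True, False, False] i \<and>
      (\<exists>h. next_official_height [True, False, False] \<le> h \<and> height [True, False, False] i < h \<and> h \<le> height [True, False, False] i + n1)} = {}"
  proof (rule equals0I)
    fix i assume "i \<in> {i. i < length [True, False, False] \<and> uncle [True, False, False] i \<and> \<not> referred_within n1 [True, False, False] i \<and>
      (\<exists>h. next_official_height [True, False, False] \<le> h \<and> height [True, False, False] i < h \<and> h \<le> height [True, False, False] i + n1)}"
    then have "i < length [True, False, False]" "uncle [True, False, False] i" "\<not> referred_within n1 [True, False, False] i" by auto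
    then have "i = 0" unfolding uncle_def official_def attacker_wins_def by (auto simp: less_Suc_eq)
    moreover have "referred_within n1 [True, False, False] 0"
      unfolding referred_within_def official_def attacker_wins_def visible_def height_def
      using n by (intro exI[of _ 2]) auto
    ultimately show False using \<open>\<not> referred_within n1 [True, False, False] i\<close> by simp
  qed
  thus ?thesis unfolding V_def by simp
qed


context fixes u :: "bool list" begin

abbreviation "om \<equiv> True # True # u"

lemma aw: "attacker_wins om" by (simp add: attacker_wins_def)

lemma off: "official om i = om ! i" by (simp add: official_def aw)

lemma uncle_D: assumes "uncle om i" shows "\<not> om ! i" "\<forall>j<i. om ! j"
proof -
  show ni: "\<not> om ! i" using assms by (simp add: uncle_def off)
  show "\<forall>j<i. om ! j"
  proof (rule ccontr)
    assume "\<not> (\<forall>j<i. om ! j)"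
    then have ex: "\<exists>j<i. om ! j = om ! i" using ni by auto
    define g where "g = (GREATEST j. j < i \<and> om ! j = om ! i)"
    have "g < i \<and> om ! g = om ! i" unfolding g_def
      using ex by (rule GreatestI_ex_nat[where b = i]) auto
    then have "\<not> official om g" using ni by (simp add: off)
    moreover have "parent om i = Some g" using ex by (simp add: parent_def g_def)
    ultimately show False using assms by (simp add: uncle_def parent_official_def)
  qed
qed

lemma uncle_I: assumes "\<not> om ! i" "\<forall>j<i. om ! j" shows "uncle om i"
proof -
  have "\<not> (\<exists>j<i. om ! j = om ! i)" using assms by auto
  then have "parent om i = None" by (simp add: parent_def)
  then show ?thesis using assms by (simp add: uncle_def parent_official_def off)
qed

lemma height_uncle: assumes "i < length om" "\<not> om ! i" "\<forall>j<i. om ! j"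
  shows "height om i = 1"
proof -
  have "take (Suc i) om = take i om @ [om ! i]" by (rule take_Suc_conv_app_nth[OF assms(1)])
  moreover have "filter (\<lambda>b. b = om ! i) (take i om) = []"
    using assms by (auto simp: filter_empty_conv in_set_conv_nth)
  ultimately show ?thesis using assms by (simp add: height_def)
qed

lemma height_le: "height om j \<le> length (filter (\<lambda>b. b) om)" if "om ! j"
proof -
  have "filter (\<lambda>b. b) om = filter (\<lambda>b. b) (take (Suc j) om) @ filter (\<lambda>b. b) (drop (Suc j) om)"
    by (metis append_take_drop_id filter_append)
  then show ?thesis using that by (simp add: height_def)
qed

lemma height_ge: "2 \<le> height om j" if hj: "om ! j" "j \<ge> 1"
proof -
  obtain m where "j = Suc m" using hj by (cases j) auto
  then show ?thesis using hj by (simp add: height_def)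
qed

lemma nof: "next_official_height om = length (filter (\<lambda>b. b) om) + 1"
  unfolding next_official_height_def off length_filter_conv_card[of "\<lambda>b. b" om] by simp

end


lemma butlast_rep: "butlast (replicate n x) = replicate (n - 1) x"
  by (simp add: butlast_conv_take)

lemma nth_rep2: "j < a + b \<Longrightarrow> (replicate a x @ replicate b y) ! j = (if j < a then x else y)"
  by (simp add: nth_append)

lemma S_char:
  assumes dw: "dyck w"
    and i: "i < length (True # True # w @ [False])" "uncle (True # True # w @ [False]) i"
      "\<not> referred_within n1 (True # True # w @ [False]) i"
      "\<exists>h. next_official_height (True # True # w @ [False]) \<le> h \<and> height (True # True # w @ [False]) i < h
            \<and> h \<le> height (True # True # w @ [False]) i + n1"
  shows "i \<ge> 2 \<and> i \<le> n1 \<and> w = replicate (i - 2) True @ replicate (i - 2) False"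
proof -
  define u where "u = w @ [False]"
  define L where "L = length (True # True # u)"
  note i = i[folded u_def]
  have ni: "\<not> (True # True # u) ! i" and allT: "\<forall>j<i. (True # True # u) ! j"
    using uncle_D[OF i(2)] by auto
  have i2: "i \<ge> 2" using ni by (cases i; cases "i - 1") auto
  have hi: "height (True # True # u) i = 1" using height_uncle[OF i(1) ni allT] .
  have cnt: "length (filter (\<lambda>b. b) (True # True # u)) \<le> n1"
    using i(4) hi nof[of u] by auto
  have laterF: "\<not> (True # True # u) ! j" if "i < j" "j < L" for j
  proof
    assume tj: "(True # True # u) ! j"
    have "2 \<le> height (True # True # u) j" using height_ge[OF tj] that by auto
    moreover have "height (True # True # u) j \<le> n1" using height_le[OF tj] cnt by simp
    ultimately have "referred_within n1 (True # True # u) i"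
      unfolding referred_within_def using that tj hi L_def
      by (intro exI[of _ j]) (auto simp: off visible_def)
    then show False using i(3) by simp
  qed
  have eq: "True # True # u = replicate i True @ replicate (L - i) False"
  proof (rule nth_equalityI)
    show "length (True # True # u) = length (replicate i True @ replicate (L - i) False)"
      using i(1) L_def by simp
    fix j assume "j < length (True # True # u)"
    then show "(True # True # u) ! j = (replicate i True @ replicate (L - i) False) ! j"
      using allT laterF[of j] ni L_def by (cases "j < i"; cases "j = i") (auto simp: nth_append)
  qed
  have "length (filter (\<lambda>b. b) (True # True # u)) = i"
    unfolding eq by simp
  with cnt have "i \<le> n1" by simp
  obtain k where k: "i = Suc (Suc k)" using i2 by (metis add_2_eq_Suc le_Suc_ex)
  have Li: "L - i \<ge> 1" using i(1) L_def by simp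
  have "w @ [False] = replicate k True @ replicate (L - i) False"
    using eq k u_def by simp
  then have "butlast (w @ [False]) = butlast (replicate k True @ replicate (L - i) False)" by simp
  then have wf: "w = replicate k True @ replicate (L - i - 1) False"
    using Li by (simp add: butlast_append butlast_rep)
  then have "k = L - i - 1" using dw dyck_rep by simp
  then show ?thesis using wf k i2 \<open>i \<le> n1\<close> by simp
qed


lemma V_SS:
  assumes dw: "dyck w"
  shows "V n1 (True # True # w @ [False]) =
    (if \<exists>k. k + 2 \<le> n1 \<and> w = replicate k True @ replicate k False then 1 else 0)"
proof -
  define S where "S = {i. i < length (True # True # w @ [False]) \<and> uncle (True # True # w @ [False]) i \<and>
      \<not> referred_within n1 (True # True # w @ [False]) i \<and>
      (\<exists>h. next_official_height (True # True # w @ [False]) \<le> h \<and> height (True # True # w @ [False]) i < h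
            \<and> h \<le> height (True # True # w @ [False]) i + n1)}"
  have VS: "V n1 (True # True # w @ [False]) = card S" unfolding V_def S_def by simp
  show ?thesis
  proof (cases "\<exists>k. k + 2 \<le> n1 \<and> w = replicate k True @ replicate k False")
    case False
    have "S = {}"
    proof (rule equals0I)
      fix i assume "i \<in> S"
      then have "i \<ge> 2 \<and> i \<le> n1 \<and> w = replicate (i - 2) True @ replicate (i - 2) False"
        unfolding S_def using S_char[OF dw] by blast
      then show False using False by (metis add.commute le_add_diff_inverse)
    qed
    then show ?thesis using VS False by simp
  next
    case True
    then obtain k where k: "k + 2 \<le> n1" "w = replicate k True @ replicate k False" by blast
    define u where "u = w @ [False]"
    have omq: "True # True # u = replicate (k+2) True @ replicate (k+1) False"
      using k u_def by (simp add: replicate_append_same[symmetric])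
    have len: "length (True # True # u) = 2 * k + 3" using omq by simp
    have nth: "(True # True # u) ! j = (j < k + 2)" if "j < 2 * k + 3" for j
    proof -
      have "(True # True # u) ! j = (replicate (k+2) True @ replicate (k+1) False) ! j"
        by (subst omq) (rule refl)
      also have "\<dots> = (j < k + 2)" using nth_rep2[of j "k+2" "k+1" True False] that by simp
      finally show ?thesis .
    qed
    have "S = {k + 2}"
    proof (rule set_eqI, rule iffI)
      fix i assume "i \<in> S"
      then have "i \<ge> 2 \<and> i \<le> n1 \<and> w = replicate (i - 2) True @ replicate (i - 2) False"
        unfolding S_def using S_char[OF dw] by blast
      then have "length w = 2 * (i - 2)" by simp
      moreover have "length w = 2 * k" using k by simp
      ultimately show "i \<in> {k + 2}" using \<open>i \<ge> 2 \<and> _\<close> by auto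
    next
      fix i assume "i \<in> {k + 2}"
      then have ii: "i = k + 2" by simp
      have ni: "\<not> (True # True # u) ! i" using nth[of i] ii by simp
      have allT: "\<forall>j<i. (True # True # u) ! j" using nth ii by auto
      have il: "i < length (True # True # u)" using len ii by simp
      have un: "uncle (True # True # u) i" using uncle_I[OF ni allT] .
      have hi: "height (True # True # u) i = 1" using height_uncle[OF il ni allT] .
      have nr: "\<not> referred_within n1 (True # True # u) i"
      proof
        assume "referred_within n1 (True # True # u) i"
        then obtain j where "j < length (True # True # u)" "i < j" "official (True # True # u) j"
          unfolding referred_within_def by blast
        then show False using nth[of j] len ii by (simp only: off)
      qed
      have fl: "length (filter (\<lambda>b. b) (True # True # u)) = k + 2" by (subst omq) simp
      have "next_official_height (True # True # u) \<le> k + 3 \<and> height (True # True # u) i < k + 3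
            \<and> k + 3 \<le> height (True # True # u) i + n1"
        using nof[of u] fl hi k(1) by simp
      then show "i \<in> S" unfolding S_def using il un nr u_def by blast
    qed
    then show ?thesis using VS True by simp
  qed
qed


definition gk :: "nat \<Rightarrow> bool list" where
  "gk k = True # True # (replicate k True @ replicate k False) @ [False]"

lemma gk_inj: "inj gk"
proof (rule injI)
  fix a b assume "gk a = gk b"
  then have "length (gk a) = length (gk b)" by simp
  then show "a = b" by (simp add: gk_def)
qed

lemma gk_cyc: "gk k \<in> attack_cycles"
  unfolding attack_cycles_def gk_def using dyck_rep[of k k] by auto

lemma cp_gk: "cycle_prob p q (gk k) = q^2 * p * (p * q) ^ k"
proof -
  have "\<exists>w. dyck w \<and> gk k = [True, True] @ w @ [False]"
    using dyck_rep[of k k] by (auto simp: gk_def)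
  moreover have "(length (gk k) - 3) div 2 = k" by (simp add: gk_def)
  ultimately show ?thesis unfolding cycle_prob_def by (simp add: gk_def)
qed

theorem proposition13:
  fixes p q :: real and n1 :: nat
  assumes "p + q = 1" and "0 < q" and "q < p" and "2 \<le> n1"
  shows "((\<lambda>\<omega>. cycle_prob p q \<omega> * real (V n1 \<omega>)) has_sum
            (p * q^2 * (1 - (p * q) ^ (n1 - 1)) / (1 - p * q))) attack_cycles"
proof -
  define f where "f = (\<lambda>\<omega>. cycle_prob p q \<omega> * real (V n1 \<omega>))"
  define F where "F = gk ` {..<n1 - 1}"
  have FA: "F \<subseteq> attack_cycles" unfolding F_def using gk_cyc by auto
  have zero: "f \<omega> = 0" if oA: "\<omega> \<in> attack_cycles" and oF: "\<omega> \<notin> F" for \<omega>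
  proof -
    have n1: "1 \<le> n1" using assms by simp
    consider "\<omega> = [False]" | "\<omega> = [True, False, True]" | "\<omega> = [True, False, False]"
      | w where "dyck w" "\<omega> = True # True # w @ [False]"
      using oA unfolding attack_cycles_def by auto
    then show ?thesis
    proof cases
      case 1 then show ?thesis by (simp add: f_def V_H)
    next
      case 2 then show ?thesis by (simp add: f_def V_SHS[OF n1])
    next
      case 3 then show ?thesis by (simp add: f_def V_SHH[OF n1])
    next
      case (4 w)
      have neg: "\<not> (\<exists>k. k + 2 \<le> n1 \<and> w = replicate k True @ replicate k False)"
      proof
        assume "\<exists>k. k + 2 \<le> n1 \<and> w = replicate k True @ replicate k False"
        then obtain k where "k + 2 \<le> n1" "w = replicate k True @ replicate k False" by blast
        then have "\<omega> \<in> F" using 4 unfolding F_def gk_def by force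
        then show False using oF by simp
      qed
      have "V n1 \<omega> = (if \<exists>k. k + 2 \<le> n1 \<and> w = replicate k True @ replicate k False then 1 else 0)"
        unfolding 4(2) by (rule V_SS[OF 4(1)])
      also have "\<dots> = 0" using neg by (rule if_not_P)
      finally show ?thesis by (simp add: f_def)
    qed
  qed
  have "(f has_sum sum f F) F" by (rule has_sum_finite) (simp add: F_def)
  then have hs: "(f has_sum sum f F) attack_cycles"
    by (subst has_sum_cong_neutral[of F attack_cycles f f]) (use zero FA in auto)
  have V1: "V n1 (gk k) = 1" if "k < n1 - 1" for k
  proof -
    have c: "\<exists>ka. ka + 2 \<le> n1 \<and> replicate k True @ replicate k False = replicate ka True @ replicate ka False"
      using that by (intro exI[of _ k]) simp
    have "V n1 (gk k) = (if \<exists>ka. ka + 2 \<le> n1 \<and> replicate k True @ replicate k False = replicate ka True @ replicate ka False then 1 else 0)"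
      unfolding gk_def by (rule V_SS[OF dyck_rep[THEN iffD2, OF refl]])
    also have "\<dots> = 1" using c by (rule if_P)
    finally show ?thesis .
  qed
  have "sum f F = (\<Sum>k<n1 - 1. f (gk k))"
    unfolding F_def by (rule sum.reindex_cong[OF inj_on_subset[OF gk_inj]]) auto
  also have "\<dots> = (\<Sum>k<n1 - 1. q^2 * p * (p * q) ^ k)"
    by (rule sum.cong) (auto simp: f_def V1 cp_gk)
  also have "\<dots> = q^2 * p * (\<Sum>k<n1 - 1. (p * q) ^ k)" by (simp add: sum_distrib_left)
  also have "\<dots> = q^2 * p * (((p * q) ^ (n1 - 1) - 1) / (p * q - 1))"
  proof -
    have pp: "0 < p" and q1: "q < 1" and p1: "p < 1" using assms by linarith+
    have "p * q < p * 1" using q1 pp by (intro mult_strict_left_mono) auto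
    then have "p * q < 1" using p1 by linarith
    then show ?thesis by (simp add: geometric_sum)
  qed
  also have "\<dots> = p * q^2 * (1 - (p * q) ^ (n1 - 1)) / (1 - p * q)"
  proof -
    have e: "(a - 1) / (x - 1) = (1 - a) / (1 - x)" for a x :: real
      by (metis minus_diff_eq minus_divide_divide)
    show ?thesis unfolding e by simp
  qed
  finally show ?thesis using hs unfolding f_def by simp
qed

end
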